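(* Let $a,b$ be integers with $0<b<a$, let $S=\langle a,a+1,\ldots,a+b\rangle$ with conductor $c$, and let $m\ge 2c-1$. Let $M$ be an ordered $(S,m,r)$-amenable subset of $S$ whose shadow has $t$ elements, and let $N$ be another $(S,m,r)$-amenable subset of $S$ whose shadow is an interval of integers containing $m$. Then the shadow of $N$ has at least $t$ elements.
   Context: For $x\in S$, $\mathrm D(x)=\{\alpha\in S\mid x-\alpha\in S\}$. A set $M=\{m_1<\cdots<m_r\}\subseteq S$ with $2c-1\le m=m_1$ is $(S,m,r)$-amenable if $\mathrm D(m_i)\cap[m,\infty)\subseteq M$ for all $i$. The ground is $\{m,m+1,\ldots,m+a+b-1\}$, and the shadow of $M$ is $M\cap\{m,\ldots,m+a+b-1\}$. For a finite $M\subseteq S\cap[m,\infty)$, let $J$ be the set of $j\in\{0,\ldots,a-1\}$ such that $x-(m+b)=qa+j$ for some $x\in M$ and some integer $q\ge 0$; if $J\neq\emptyset$ let $j_0=\max J$ and let the wagon of $M$ be $W=\{x\in M\mid x-(m+b)=qa+j_0\text{ for some integer }q\}$. An element $P\in M$ is the pivot of $M$ if either $P<m+b$ and $P=\max M$, or $P=\max W$. An $(S,m,r)$-amenable set $M$ with pivot $P$ is ordered amenable if (i) its shadow is $\{m,m+1,\ldots,m+t\}$ for some integer $0\le t<a+b-1$, and (ii) whenever $s\in S\setminus M$ is such that $M\cup\{s\}$ is $(S,m,r+1)$-amenable with the same shadow as $M$, we have $s=P+a$. *)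

theory Defs
  imports Main
begin

definition gen_semigroup :: "nat set \<Rightarrow> nat set" where
  "gen_semigroup G = {n. \<exists>f :: nat \<Rightarrow> nat. finite {g. f g \<noteq> 0} \<and> {g. f g \<noteq> 0} \<subseteq> G
                          \<and> n = (\<Sum>g\<in>{g. f g \<noteq> 0}. f g * g)}"

definition S_ab :: "nat \<Rightarrow> nat \<Rightarrow> nat set" where
  "S_ab a b = gen_semigroup {a..a+b}"

definition conductor :: "nat set \<Rightarrow> nat" where
  "conductor S = (LEAST c. \<forall>n\<ge>c. n \<in> S)"

definition Dset :: "nat set \<Rightarrow> nat \<Rightarrow> nat set" where
  "Dset S x = {\<alpha> \<in> S. \<alpha> \<le> x \<and> x - \<alpha> \<in> S}"

definition amenable :: "nat set \<Rightarrow> nat \<Rightarrow> nat \<Rightarrow> nat set \<Rightarrow> bool" where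
  "amenable S m r M \<longleftrightarrow> finite M \<and> card M = r \<and> M \<subseteq> S \<and> M \<noteq> {} \<and> Min M = m
     \<and> 2 * conductor S - 1 \<le> m
     \<and> (\<forall>x\<in>M. Dset S x \<inter> {m..} \<subseteq> M)"

definition shadow :: "nat \<Rightarrow> nat \<Rightarrow> nat \<Rightarrow> nat set \<Rightarrow> nat set" where
  "shadow a b m M = M \<inter> {m..m + a + b - 1}"

definition Jset :: "nat \<Rightarrow> nat \<Rightarrow> nat \<Rightarrow> nat set \<Rightarrow> nat set" where
  "Jset a b m M = {j. j < a \<and> (\<exists>x\<in>M. \<exists>q::nat. int x - int (m + b) = int q * int a + int j)}"

definition wagon :: "nat \<Rightarrow> nat \<Rightarrow> nat \<Rightarrow> nat set \<Rightarrow> nat set" where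
  "wagon a b m M = {x\<in>M. \<exists>q::int. int x - int (m + b) = q * int a + int (Max (Jset a b m M))}"

definition is_pivot :: "nat \<Rightarrow> nat \<Rightarrow> nat \<Rightarrow> nat set \<Rightarrow> nat \<Rightarrow> bool" where
  "is_pivot a b m M P \<longleftrightarrow> P \<in> M \<and>
     ((P < m + b \<and> P = Max M) \<or> (Jset a b m M \<noteq> {} \<and> P = Max (wagon a b m M)))"

definition ordered_amenable :: "nat \<Rightarrow> nat \<Rightarrow> nat \<Rightarrow> nat \<Rightarrow> nat set \<Rightarrow> bool" where
  "ordered_amenable a b m r M \<longleftrightarrow> amenable (S_ab a b) m r M
     \<and> (\<exists>P. is_pivot a b m M P
        \<and> (\<exists>t::nat. t + 1 < a + b \<and> shadow a b m M = {m..m+t})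
        \<and> (\<forall>s \<in> S_ab a b - M. amenable (S_ab a b) m (r+1) (M \<union> {s})
              \<and> shadow a b m (M \<union> {s}) = shadow a b m M \<longrightarrow> s = P + a))"

end

theory Submission imports Defs begin

lemma S_lin:
  assumes "0 < b"
  shows "i*a + j*(a+1) \<in> S_ab a b"
proof -
  define f where "f = (\<lambda>g::nat. if g = a then i else if g = a+1 then j else 0)"
  have sub: "{g. f g \<noteq> 0} \<subseteq> {a, a+1}" by (auto simp: f_def split: if_splits)
  have fin: "finite {g. f g \<noteq> 0}" using sub finite_subset by blast
  have "(\<Sum>g\<in>{g. f g \<noteq> 0}. f g * g) = (\<Sum>g\<in>{a, a+1}. f g * g)"
    by (rule sum.mono_neutral_left) (use sub in auto)
  also have "\<dots> = i*a + j*(a+1)" by (simp add: f_def)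
  finally have e: "i*a + j*(a+1) = (\<Sum>g\<in>{g. f g \<noteq> 0}. f g * g)" by simp
  have "{g. f g \<noteq> 0} \<subseteq> {a..a+b}" using sub assms by auto
  then show ?thesis unfolding S_ab_def gen_semigroup_def using fin e by blast
qed

lemma S_pos:
  assumes "n \<in> S_ab a b" "n \<noteq> 0"
  shows "a \<le> n"
proof -
  obtain f where fin: "finite {g. f g \<noteq> 0}" and sub: "{g. f g \<noteq> (0::nat)} \<subseteq> {a..a+b}"
    and e: "n = (\<Sum>g\<in>{g. f g \<noteq> 0}. f g * g)"
    using assms(1) unfolding S_ab_def gen_semigroup_def by blast
  have "{g. f g \<noteq> 0} \<noteq> {}" proof assume "{g. f g \<noteq> 0} = {}" then have "n = 0" using e by simp then show False using assms(2) by simp qed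
  then obtain g where g: "f g \<noteq> 0" by auto
  have "f g * g \<le> n" unfolding e by (rule member_le_sum) (use g fin in auto)
  moreover have "a \<le> g" using g sub by auto
  moreover have "g \<le> f g * g" using g by simp
  ultimately show ?thesis by linarith
qed

lemma S_large:
  assumes "0 < b" "0 < a" "a*a \<le> n"
  shows "n \<in> S_ab a b"
proof -
  define q where "q = n div a"
  define r where "r = n mod a"
  have n: "n = q*a + r" unfolding q_def r_def by simp
  have "r < a" unfolding r_def using assms by simp
  have "a \<le> q" unfolding q_def using assms by (metis div_le_mono nonzero_mult_div_cancel_left less_not_refl2)
  hence "r \<le> q" using \<open>r < a\<close> by simp
  have "n = (q - r)*a + r*(a+1)" using n \<open>r \<le> q\<close> by (simp add: algebra_simps diff_mult_distrib)
  then show ?thesis using S_lin[OF assms(1)] by metis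
qed

lemma cond:
  assumes "0 < b" "b < a"
  shows "\<forall>n\<ge>conductor (S_ab a b). n \<in> S_ab a b" "1 \<le> conductor (S_ab a b)"
proof -
  have ex: "\<forall>n\<ge>a*a. n \<in> S_ab a b" using S_large assms by simp
  show "\<forall>n\<ge>conductor (S_ab a b). n \<in> S_ab a b"
    unfolding conductor_def by (rule LeastI[of _ "a*a"]) (rule ex)
  show "1 \<le> conductor (S_ab a b)"
  proof (rule ccontr)
    assume "\<not> 1 \<le> conductor (S_ab a b)"
    hence "conductor (S_ab a b) = 0" by simp
    with \<open>\<forall>n\<ge>conductor (S_ab a b). n \<in> S_ab a b\<close> have "1 \<in> S_ab a b" by auto
    from S_pos[OF this] assms show False by simp
  qed
qed


theorem proposition4p17:
  fixes a b m r t :: nat and M N :: "nat set"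
  assumes "0 < b" and "b < a"
    and "2 * conductor (S_ab a b) - 1 \<le> m"
    and "ordered_amenable a b m r M"
    and "card (shadow a b m M) = t"
    and "amenable (S_ab a b) m r N"
    and "\<exists>lo hi. shadow a b m N = {lo..hi}" and "m \<in> shadow a b m N"
  shows "card (shadow a b m N) \<ge> t"
proof (rule ccontr)
  assume nlt: "\<not> card (shadow a b m N) \<ge> t"
  let ?S = "S_ab a b"
  have allS: "\<And>n. m \<le> n \<Longrightarrow> n \<in> ?S" using cond[OF assms(1,2)] assms(3) by auto
  have aM: "amenable ?S m r M" and piv: "\<exists>P. is_pivot a b m M P
        \<and> (\<exists>t::nat. t + 1 < a + b \<and> shadow a b m M = {m..m+t})
        \<and> (\<forall>s \<in> ?S - M. amenable ?S m (r+1) (M \<union> {s})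
              \<and> shadow a b m (M \<union> {s}) = shadow a b m M \<longrightarrow> s = P + a)"
    using assms(4) unfolding ordered_amenable_def by blast+
  then obtain P t' where P: "is_pivot a b m M P" and t': "t' + 1 < a + b"
    and shM: "shadow a b m M = {m..m+t'}"
    and add: "\<And>s. s \<in> ?S - M \<Longrightarrow> amenable ?S m (r+1) (M \<union> {s})
              \<Longrightarrow> shadow a b m (M \<union> {s}) = shadow a b m M \<Longrightarrow> s = P + a" by blast
  have finM: "finite M" and cM: "card M = r" and MS: "M \<subseteq> ?S" and minM: "Min M = m"
    and clM: "\<forall>x\<in>M. Dset ?S x \<inter> {m..} \<subseteq> M" and Mne: "M \<noteq> {}"
    using aM unfolding amenable_def by auto
  have finN: "finite N" and cN: "card N = r" and NS: "N \<subseteq> ?S" and minN: "Min N = m"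
    and clN: "\<forall>x\<in>N. Dset ?S x \<inter> {m..} \<subseteq> N" and Nne: "N \<noteq> {}"
    using assms(6) unfolding amenable_def by auto
  have Mge: "\<And>x. x \<in> M \<Longrightarrow> m \<le> x" using minM finM by (metis Min_le)
  have Nge: "\<And>x. x \<in> N \<Longrightarrow> m \<le> x" using minN finN by (metis Min_le)
  obtain lo hi where lh: "shadow a b m N = {lo..hi}" using assms(7) by blast
  have "lo \<in> shadow a b m N" using lh assms(8) by auto
  hence "lo \<ge> m" unfolding shadow_def by auto
  moreover have "lo \<le> m" using lh assms(8) by auto
  ultimately have shN: "shadow a b m N = {m..hi}" using lh by simp
  have "card {m..hi} < card {m..m+t'}" using nlt assms(5) shM shN by simp
  hence hi: "hi < m + t'" by simp
  have ab: "m + t' \<le> m + a + b - 1" using t' by simp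
  have NM: "N \<subseteq> M"
  proof (rule ccontr)
    assume "\<not> N \<subseteq> M"
    hence ne: "N - M \<noteq> {}" by auto
    define y where "y = Min (N - M)"
    have yNM: "y \<in> N - M" unfolding y_def using ne finN by (meson Min_in finite_Diff)
    have ymin: "\<And>z. z \<in> N \<Longrightarrow> z < y \<Longrightarrow> z \<in> M"
      using finN y_def by (metis DiffI Min_le finite_Diff leD)
    have ybig: "m + a + b - 1 < y"
    proof (rule ccontr)
      assume "\<not> m + a + b - 1 < y"
      hence "y \<in> shadow a b m N" using yNM Nge unfolding shadow_def by auto
      hence "y \<in> shadow a b m M" using shN shM hi by auto
      thus False using yNM unfolding shadow_def by auto
    qed
    have am2: "amenable ?S m (r+1) (M \<union> {y})"
      unfolding amenable_def
    proof (intro conjI)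
      show "finite (M \<union> {y})" using finM by simp
      show "card (M \<union> {y}) = r + 1" using finM cM yNM by simp
      show "M \<union> {y} \<subseteq> ?S" using MS NS yNM by auto
      show "M \<union> {y} \<noteq> {}" by simp
      show "Min (M \<union> {y}) = m" using finM Mne minM ybig
        by (simp add: Min_insert)
      show "2 * conductor ?S - 1 \<le> m" by (rule assms(3))
      show "\<forall>x\<in>M \<union> {y}. Dset ?S x \<inter> {m..} \<subseteq> M \<union> {y}"
      proof
        fix x assume "x \<in> M \<union> {y}"
        then consider "x \<in> M" | "x = y" by auto
        then show "Dset ?S x \<inter> {m..} \<subseteq> M \<union> {y}"
        proof cases
          case 1 then show ?thesis using clM by auto
        next
          case 2
          show ?thesis
          proof
            fix z assume z: "z \<in> Dset ?S x \<inter> {m..}"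
            hence zN: "z \<in> N" using clN yNM 2 by auto
            have "z \<le> y" using z 2 unfolding Dset_def by auto
            then show "z \<in> M \<union> {y}" using ymin zN by (cases "z = y") auto
          qed
        qed
      qed
    qed
    have sh2: "shadow a b m (M \<union> {y}) = shadow a b m M"
      unfolding shadow_def using ybig by auto
    have yP: "y = P + a" using add[OF _ am2 sh2] yNM NS by auto
    from P consider "P < m + b" "P = Max M" | "Jset a b m M \<noteq> {}" "P = Max (wagon a b m M)"
      unfolding is_pivot_def by blast
    then show False
    proof cases
      case 1 then show ?thesis using yP ybig by simp
    next
      case 2
      define j0 where "j0 = Max (Jset a b m M)"
      have finJ: "finite (Jset a b m M)" unfolding Jset_def by (rule finite_subset[of _ "{..<a}"]) auto
      have j0J: "j0 \<in> Jset a b m M" unfolding j0_def using 2 finJ by (simp add: Max_in)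
      hence j0a: "j0 < a" unfolding Jset_def by simp
      have tb: "b \<le> t' \<Longrightarrow> t' - b \<le> j0"
      proof -
        assume "b \<le> t'"
        have "m + t' \<in> M" using shM unfolding shadow_def by auto
        hence "t' - b \<in> Jset a b m M" unfolding Jset_def using t' \<open>b \<le> t'\<close>
          by (auto intro!: bexI[of _ "m+t'"] exI[of _ 0])
        thus ?thesis unfolding j0_def using finJ by simp
      qed
      obtain x q where "x \<in> M" "int x - int (m + b) = int q * int a + int j0"
        using j0J unfolding Jset_def by blast
      hence "x \<in> wagon a b m M" unfolding wagon_def j0_def[symmetric]
        by (auto intro!: exI[of _ "int q"])
      moreover have "finite (wagon a b m M)" unfolding wagon_def using finM by simp
      ultimately have "P \<in> wagon a b m M" using 2 by (auto intro: Max_in)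
      then obtain q' where q': "int P - int (m + b) = q' * int a + int j0"
        unfolding wagon_def j0_def by blast
      have ey: "int y - int (m + b) = (q' + 1) * int a + int j0" using q' yP by (simp add: algebra_simps)
      have "q' + 1 \<ge> 1"
      proof (rule ccontr)
        assume "\<not> q' + 1 \<ge> 1"
        hence "(q' + 1) * int a \<le> 0" using assms by (simp add: mult_nonpos_nonneg)
        hence "int y - int (m+b) < int a" using ey j0a by linarith
        thus False using ybig by linarith
      qed
      define Q where "Q = nat (q' + 1)"
      have Q1: "1 \<le> Q" and QQ: "int Q = q' + 1" unfolding Q_def using \<open>q' + 1 \<ge> 1\<close> by auto
      define z where "z = m + b + j0"
      have "int y = int z + int Q * int a" unfolding z_def using ey QQ by (simp add: algebra_simps)
      hence yz: "y = z + Q * a" by (metis of_nat_add of_nat_eq_iff of_nat_mult)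
      have "Q * a \<in> ?S" using S_lin[OF assms(1), of Q a 0] by simp
      moreover have "z \<in> ?S" using allS z_def by simp
      ultimately have "z \<in> Dset ?S y \<inter> {m..}" unfolding Dset_def using yz z_def by auto
      hence "z \<in> N" using clN yNM by auto
      moreover have "z \<le> m + a + b - 1" using j0a z_def by simp
      ultimately have "z \<in> shadow a b m N" unfolding shadow_def z_def by auto
      hence "z \<le> hi" using shN by auto
      moreover have "m + t' \<le> z" using tb unfolding z_def by (cases "b \<le> t'") auto
      ultimately show False using hi by simp
    qed
  qed
  have "N = M" using card_subset_eq[OF finM NM] cM cN by simp
  moreover have "m + t' \<in> M" using shM unfolding shadow_def by auto
  ultimately have "m + t' \<in> shadow a b m N" unfolding shadow_def using ab by auto
  thus False using shN hi by auto
qed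

end
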